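(* There exists a numerical constant $c>0$ such that, for every time horizon $T\in\mathbb N$, every algorithm for the full-feedback brokerage problem satisfies \[\sup_\nu R_T^\nu\ge c\sqrt T,\] where the supremum is over all probability distributions $\nu$ on $[0,1]$.
   Context: Brokerage setting: for $p,v_1,v_2\in[0,1]$ let $\mathrm{gft}(p,v_1,v_2):=(v_1\vee v_2-v_1\wedge v_2)\,\mathbb I\{v_1\wedge v_2\le p\le v_1\vee v_2\}$ ($\vee,\wedge$ = max, min). Valuations $V_1,V_2,\dots$ are i.i.d. with law $\nu$ on $[0,1]$; at round $t$ the algorithm posts $P_t\in[0,1]$ and obtains $\mathrm{GFT}_t(P_t)$ with $\mathrm{GFT}_t(q):=\mathrm{gft}(q,V_{2t-1},V_{2t})$. A full-feedback algorithm chooses $P_t$ as a measurable function of $V_1,\dots,V_{2(t-1)}$ (and possibly internal randomness independent of the valuations). $R_T^\nu:=\sup_{p\in[0,1]}\mathbb E[\sum_{t=1}^T\mathrm{GFT}_t(p)]-\mathbb E[\sum_{t=1}^T\mathrm{GFT}_t(P_t)]$ when valuations have law $\nu$. *)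

theory Defs
  imports "HOL-Probability.Probability"
begin

definition gft :: "real \<Rightarrow> real \<Rightarrow> real \<Rightarrow> real" where
  "gft p v1 v2 = (if min v1 v2 \<le> p \<and> p \<le> max v1 v2 then max v1 v2 - min v1 v2 else 0)"

text \<open>Valuations V_1..V_{2T} are indexed 0..2T-1; round t (0-based, t < T)
  uses the pair (v (2t), v (2t+1)).\<close>
definition val_space :: "nat \<Rightarrow> real measure \<Rightarrow> (nat \<Rightarrow> real) measure" where
  "val_space T \<nu> = PiM {..<2*T} (\<lambda>_. \<nu>)"

text \<open>Joint law of valuations and the algorithm's independent internal randomness
  (a seed with law R on the reals).\<close>
definition full_space :: "nat \<Rightarrow> real measure \<Rightarrow> real measure \<Rightarrow> ((nat \<Rightarrow> real) \<times> real) measure" where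
  "full_space T \<nu> R = val_space T \<nu> \<Otimes>\<^sub>M R"

definition full_feedback_alg ::
  "nat \<Rightarrow> real measure \<Rightarrow> (nat \<Rightarrow> (nat \<Rightarrow> real) \<Rightarrow> real \<Rightarrow> real) \<Rightarrow> bool" where
  "full_feedback_alg T R alg \<longleftrightarrow>
     (\<forall>t<T. (\<lambda>\<omega>. alg t (fst \<omega>) (snd \<omega>)) \<in> borel_measurable (PiM {..<2*T} (\<lambda>_. borel) \<Otimes>\<^sub>M R)) \<and>
     (\<forall>t<T. \<forall>v w u. (\<forall>i<2*t. v i = w i) \<longrightarrow> alg t v u = alg t w u) \<and>
     (\<forall>t<T. \<forall>v u. 0 \<le> alg t v u \<and> alg t v u \<le> 1)"

definition prob_dists_01 :: "real measure set" where
  "prob_dists_01 = {\<nu>. prob_space \<nu> \<and> sets \<nu> = sets borel \<and> measure \<nu> {0..1} = 1}"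

definition regret :: "nat \<Rightarrow> real measure \<Rightarrow> real measure \<Rightarrow> (nat \<Rightarrow> (nat \<Rightarrow> real) \<Rightarrow> real \<Rightarrow> real) \<Rightarrow> real" where
  "regret T \<nu> R alg =
     (SUP p\<in>{0..1::real}. \<integral>v. (\<Sum>t<T. gft p (v (2*t)) (v (2*t+1))) \<partial>val_space T \<nu>)
     - (\<integral>\<omega>. (\<Sum>t<T. gft (alg t (fst \<omega>) (snd \<omega>)) (fst \<omega> (2*t)) (fst \<omega> (2*t+1))) \<partial>full_space T \<nu> R)"

end

theory Submission
  imports Defs
begin


definition S3 :: "real set" where "S3 = {0, 1/3, 2/3, 1}"

definition w :: "real \<Rightarrow> real \<Rightarrow> real" where
 "w e x = (if x = 0 then (1+e)/4 else if x = 1/3 then 1/4 else if x = 2/3 then 1/4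
           else if x = 1 then (1-e)/4 else 0)"

definition mu :: "real \<Rightarrow> real pmf" where "mu e = embed_pmf (w e)"

lemma w_nonneg: "\<bar>e\<bar> \<le> 1 \<Longrightarrow> 0 \<le> w e x"
  by (auto simp: w_def)

lemma w_sum: "\<bar>e\<bar> \<le> 1 \<Longrightarrow> (\<integral>\<^sup>+x. ennreal (w e x) \<partial>count_space UNIV) = 1"
proof -
  assume e: "\<bar>e\<bar> \<le> 1"
  have "(\<integral>\<^sup>+x. ennreal (w e x) \<partial>count_space UNIV) = (\<Sum>x\<in>S3. ennreal (w e x))"
    by (rule nn_integral_count_space') (auto simp: S3_def w_def)
  also have "\<dots> = ennreal (\<Sum>x\<in>S3. w e x)"
    using e by (intro sum_ennreal) (auto simp: w_nonneg)
  also have "(\<Sum>x\<in>S3. w e x) = 1" by (simp add: S3_def w_def field_simps)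
  finally show ?thesis by simp
qed

lemma pmf_mu: "\<bar>e\<bar> \<le> 1 \<Longrightarrow> pmf (mu e) x = w e x"
  unfolding mu_def by (rule pmf_embed_pmf) (auto simp: w_nonneg w_sum)

lemma set_mu: "\<bar>e\<bar> \<le> 1 \<Longrightarrow> set_pmf (mu e) \<subseteq> S3"
  by (auto simp: set_pmf_eq pmf_mu S3_def w_def)



definition Gf :: "real \<Rightarrow> real \<Rightarrow> real" where
  "Gf e p = (\<Sum>a\<in>S3. \<Sum>b\<in>S3. w e a * w e b * gft p a b)"

lemma Gf_ineq:
  assumes e: "0 \<le> e" "e \<le> 1" and p: "0 \<le> p" "p \<le> 1"
  shows "Gf e p \<le> Gf e (1/3) \<and> Gf (-e) p \<le> Gf (-e) (2/3) \<and>
         Gf e p + Gf (-e) p + e/12 \<le> Gf e (1/3) + Gf (-e) (2/3)"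
proof -
  consider "p = 0" | "0 < p \<and> p < 1/3" | "p = 1/3" | "1/3 < p \<and> p < 2/3" | "p = 2/3"
    | "2/3 < p \<and> p < 1" | "p = 1" using p by linarith
  then show ?thesis
  proof cases
    case 1 then show ?thesis using e by (simp add: Gf_def S3_def w_def gft_def field_simps)
  next
    case 2 then show ?thesis using e by (simp add: Gf_def S3_def w_def gft_def field_simps)
  next
    case 3 then show ?thesis using e by (simp add: Gf_def S3_def w_def gft_def field_simps)
  next
    case 4 then show ?thesis using e by (simp add: Gf_def S3_def w_def gft_def field_simps)
  next
    case 5 then show ?thesis using e by (simp add: Gf_def S3_def w_def gft_def field_simps)
  next
    case 6 then show ?thesis using e by (simp add: Gf_def S3_def w_def gft_def field_simps)
  next
    case 7 then show ?thesis using e by (simp add: Gf_def S3_def w_def gft_def field_simps)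
  qed
qed



lemma gft_nonneg: "0 \<le> gft p a b"
  by (simp add: gft_def)

lemma Gf_nonneg: "\<bar>e\<bar> \<le> 1 \<Longrightarrow> 0 \<le> Gf e p"
  unfolding Gf_def by (intro sum_nonneg mult_nonneg_nonneg w_nonneg gft_nonneg) auto

abbreviation PP :: "real \<Rightarrow> nat \<Rightarrow> (nat \<Rightarrow> real) pmf" where
  "PP e n \<equiv> Pi_pmf {..<n} 0 (\<lambda>_. mu e)"

definition U :: "nat \<Rightarrow> (nat \<Rightarrow> real) set" where
  "U n = PiE_dflt {..<n} 0 (\<lambda>_. S3)"

lemma finite_U: "finite (U n)"
  unfolding U_def by (intro finite_PiE_dflt) (auto simp: S3_def)

lemma set_PP: "\<bar>e\<bar> \<le> 1 \<Longrightarrow> set_pmf (PP e n) \<subseteq> U n"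
  using set_mu[of e] by (auto simp: set_Pi_pmf U_def PiE_dflt_def)

lemma finite_set_PP: "\<bar>e\<bar> \<le> 1 \<Longrightarrow> finite (set_pmf (PP e n))"
  using finite_subset[OF set_PP finite_U] .

lemma nnE:
  assumes "finite (set_pmf M)" "\<And>x. 0 \<le> f x"
  shows "(\<integral>\<^sup>+x. ennreal (f x) \<partial>measure_pmf M) = ennreal (measure_pmf.expectation M f)"
  using assms by (intro nn_integral_eq_integral integrable_measure_pmf_finite) auto

lemma finite_S3: "finite S3" by (simp add: S3_def)

lemma set_pair_mu: "\<bar>e\<bar> \<le> 1 \<Longrightarrow> set_pmf (pair_pmf (mu e) (mu e)) \<subseteq> S3 \<times> S3"
  using set_mu[of e] by auto

lemma Gexp:
  assumes "\<bar>e\<bar> \<le> 1"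
  shows "(\<integral>\<^sup>+x. ennreal (gft p (fst x) (snd x)) \<partial>pair_pmf (mu e) (mu e)) = ennreal (Gf e p)"
proof -
  have fin: "finite (set_pmf (pair_pmf (mu e) (mu e)))"
    using set_pair_mu[OF assms] finite_S3 by (meson finite_SigmaI finite_subset)
  have "(\<integral>\<^sup>+x. ennreal (gft p (fst x) (snd x)) \<partial>pair_pmf (mu e) (mu e))
      = ennreal (measure_pmf.expectation (pair_pmf (mu e) (mu e)) (\<lambda>x. gft p (fst x) (snd x)))"
    by (rule nnE[OF fin gft_nonneg])
  also have "measure_pmf.expectation (pair_pmf (mu e) (mu e)) (\<lambda>x. gft p (fst x) (snd x))
     = (\<Sum>x\<in>S3\<times>S3. gft p (fst x) (snd x) * pmf (pair_pmf (mu e) (mu e)) x)"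
    apply (rule integral_measure_pmf_real)
    using set_pair_mu[OF assms] finite_S3 by auto
  also have "\<dots> = (\<Sum>(a,b)\<in>S3\<times>S3. w e a * w e b * gft p a b)"
    apply (rule sum.cong[OF refl])
    apply (clarify)
    apply (simp only: pmf_pair pmf_mu[OF assms] fst_conv snd_conv split)
    by (simp only: mult_ac)
  also have "\<dots> = Gf e p"
    unfolding Gf_def by (rule sum.cartesian_product[symmetric])
  finally show ?thesis .
qed

lemma pairmarg:
  assumes "finite B" "i \<in> B" "j \<in> B" "i \<noteq> j"
  shows "map_pmf (\<lambda>b. (b i, b j)) (Pi_pmf B 0 (\<lambda>_. m)) = pair_pmf m m"
proof -
  have B: "B = insert i (B - {i})" using assms by auto
  have "Pi_pmf B 0 (\<lambda>_. m) = map_pmf (\<lambda>(y,f). f(i:=y)) (pair_pmf m (Pi_pmf (B - {i}) 0 (\<lambda>_. m)))"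
    by (subst B, rule Pi_pmf_insert) (use assms in auto)
  hence "map_pmf (\<lambda>b. (b i, b j)) (Pi_pmf B 0 (\<lambda>_. m))
      = map_pmf (\<lambda>(y,f). (y, f j)) (pair_pmf m (Pi_pmf (B - {i}) 0 (\<lambda>_. m)))"
    using assms by (simp add: pmf.map_comp o_def case_prod_unfold)
  also have "\<dots> = pair_pmf (map_pmf (\<lambda>y. y) m) (map_pmf (\<lambda>f. f j) (Pi_pmf (B - {i}) 0 (\<lambda>_. m)))"
    by (subst map_pair[symmetric]) (simp add: case_prod_unfold)
  also have "map_pmf (\<lambda>f. f j) (Pi_pmf (B - {i}) 0 (\<lambda>_. m)) = m"
    using assms by (subst Pi_pmf_component) auto
  finally show ?thesis by simp
qed

lemma marg:
  assumes e: "\<bar>e\<bar> \<le> 1" and t: "t < T"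
    and d: "\<And>v v'. (\<forall>i<2*t. v i = v' i) \<Longrightarrow> D v = D v'"
  shows "(\<integral>\<^sup>+v. ennreal (gft (D v) (v (2*t)) (v (2*t+1))) \<partial>PP e (2*T))
       = (\<integral>\<^sup>+v. ennreal (Gf e (D v)) \<partial>PP e (2*t))"
proof -
  let ?B = "{2*t..<2*T}"
  have un: "{..<2*T} = {..<2*t} \<union> ?B" using t by auto
  have "PP e (2*T) = map_pmf (\<lambda>(f,g) x. if x \<in> {..<2*t} then f x else g x)
            (pair_pmf (PP e (2*t)) (Pi_pmf ?B 0 (\<lambda>_. mu e)))"
    by (subst un, rule Pi_pmf_union) auto
  hence "(\<integral>\<^sup>+v. ennreal (gft (D v) (v (2*t)) (v (2*t+1))) \<partial>PP e (2*T))
     = (\<integral>\<^sup>+a. \<integral>\<^sup>+b. ennreal (gft (D (\<lambda>x. if x \<in> {..<2*t} then a x else b x)) (b (2*t)) (b (2*t+1)))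
          \<partial>Pi_pmf ?B 0 (\<lambda>_. mu e) \<partial>PP e (2*t))"
    by (simp add: nn_integral_pair_pmf')
  also have "\<dots> = (\<integral>\<^sup>+a. \<integral>\<^sup>+b. ennreal (gft (D a) (fst b) (snd b))
          \<partial>map_pmf (\<lambda>b. (b (2*t), b (2*t+1))) (Pi_pmf ?B 0 (\<lambda>_. mu e)) \<partial>PP e (2*t))"
  proof -
    have "D (\<lambda>x. if x \<in> {..<2*t} then a x else b x) = D a" for a b :: "nat \<Rightarrow> real"
      by (rule d) auto
    thus ?thesis by simp
  qed
  also have "\<dots> = (\<integral>\<^sup>+a. ennreal (Gf e (D a)) \<partial>PP e (2*t))"
    using t by (subst pairmarg) (auto simp: Gexp[OF e])
  finally show ?thesis .
qed



lemma sqrt_min_bound: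
  fixes a b :: real
  assumes "0 \<le> a" "0 \<le> b"
  shows "sqrt (a*b) \<le> 2 * min a b + (a+b)/8"
proof -
  have key: "sqrt (x*y) \<le> 2*x + y/8" if "0 \<le> x" "0 \<le> y" for x y :: real
  proof -
    have h: "(2*x + y/8)^2 = x*y + (2*x - y/8)^2" by (simp add: power2_eq_square algebra_simps)
    have "x*y \<le> (2*x + y/8)^2" unfolding h by simp
    thus ?thesis using that by (intro real_le_lsqrt) auto
  qed
  show ?thesis
  proof (cases "a \<le> b")
    case True
    have k: "sqrt (a*b) \<le> 2*a + b/8" using key[of a b] assms by auto
    have "0 \<le> a/8" using assms by simp
    then show ?thesis using k True by (simp add: min_def add_divide_distrib)
  next
    case False
    have k: "sqrt (a*b) \<le> 2*b + a/8" using key[of b a] assms by (auto simp: mult.commute)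
    have "0 \<le> b/8" using assms by simp
    then show ?thesis using k False by (simp add: min_def add_divide_distrib)
  qed
qed

lemma sqrt_prod: "finite A \<Longrightarrow> sqrt (\<Prod>x\<in>A. f x) = (\<Prod>x\<in>A. sqrt (f x))"
  by (induct rule: finite_induct) (simp_all add: real_sqrt_mult)

lemma w_pos: "\<bar>e\<bar> < 1 \<Longrightarrow> x \<in> S3 \<Longrightarrow> 0 < w e x"
  by (auto simp: S3_def w_def)

lemma pmf_PP: "\<bar>e\<bar> \<le> 1 \<Longrightarrow> v \<in> U n \<Longrightarrow> pmf (PP e n) v = (\<Prod>i<n. w e (v i))"
  by (subst pmf_Pi') (auto simp: U_def PiE_dflt_def pmf_mu)

lemma sqrt_ratio: "0 < a \<Longrightarrow> a * sqrt (b / a) = sqrt (a * b)"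
proof -
  assume a: "0 < a"
  have "sqrt (a*b) = sqrt (a^2 * (b/a))" using a by (simp add: power2_eq_square)
  also have "\<dots> = sqrt (a^2) * sqrt (b/a)" by (rule real_sqrt_mult)
  also have "\<dots> = a * sqrt (b/a)" using a by simp
  finally show ?thesis by simp
qed

lemma BC_base: "\<bar>e\<bar> < 1 \<Longrightarrow> (\<Sum>x\<in>S3. sqrt (w e x * w (-e) x)) = (1 + sqrt (1 - e^2)) / 2"
proof -
  assume "\<bar>e\<bar> < 1"
  have a: "sqrt ((1+e)/4 * ((1-e)/4)) = sqrt (1 - e^2) / 4"
  proof -
    have "(1+e)/4 * ((1-e)/4) = (1 - e^2) / 16" by (simp add: field_simps power2_eq_square)
    thus ?thesis by (simp add: real_sqrt_divide)
  qed
  have b: "sqrt ((1-e)/4 * ((1+e)/4)) = sqrt (1 - e^2) / 4"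
    using a by (simp add: mult.commute)
  have c: "sqrt (1/4 * (1/4::real)) = 1/4"
    by (simp add: real_sqrt_divide)
  show ?thesis using a b c by (simp add: S3_def w_def)
qed

lemma BC:
  assumes e: "\<bar>e\<bar> < 1"
  shows "(\<Sum>v\<in>U n. sqrt (pmf (PP e n) v * pmf (PP (-e) n) v)) = ((1 + sqrt (1 - e^2)) / 2) ^ n"
proof -
  define r where "r x = sqrt (w (-e) x / w e x)" for x
  have e1: "\<bar>e\<bar> \<le> 1" "\<bar>-e\<bar> \<le> 1" using e by auto
  have "(\<Sum>v\<in>U n. sqrt (pmf (PP e n) v * pmf (PP (-e) n) v)) = (\<Sum>v\<in>U n. (\<Prod>i<n. r (v i)) * pmf (PP e n) v)"
  proof (intro sum.cong refl)
    fix v assume v: "v \<in> U n"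
    have vi: "v i \<in> S3" if "i < n" for i using v that by (auto simp: U_def PiE_dflt_def)
    have "sqrt (pmf (PP e n) v * pmf (PP (-e) n) v) = sqrt (\<Prod>i<n. w e (v i) * w (-e) (v i))"
      using v e1 by (simp add: pmf_PP prod.distrib)
    also have "\<dots> = (\<Prod>i<n. sqrt (w e (v i) * w (-e) (v i)))" by (simp add: sqrt_prod)
    also have "\<dots> = (\<Prod>i<n. w e (v i) * r (v i))"
      by (intro prod.cong refl) (simp add: r_def sqrt_ratio w_pos[OF e vi])
    also have "\<dots> = (\<Prod>i<n. r (v i)) * pmf (PP e n) v"
      using v e1 by (simp add: pmf_PP prod.distrib mult.commute)
    finally show "sqrt (pmf (PP e n) v * pmf (PP (-e) n) v) = (\<Prod>i<n. r (v i)) * pmf (PP e n) v" .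
  qed
  also have "\<dots> = measure_pmf.expectation (PP e n) (\<lambda>v. \<Prod>i<n. r (v i))"
    by (rule integral_measure_pmf_real[symmetric]) (use set_PP[OF e1(1)] finite_U in auto)
  also have "\<dots> = (\<Prod>i<n. measure_pmf.expectation (mu e) r)"
    using set_mu[OF e1(1)]
    by (intro expectation_prod_Pi_pmf) (auto intro: integrable_measure_pmf_finite finite_subset simp: S3_def r_def w_nonneg e1)
  also have "measure_pmf.expectation (mu e) r = (\<Sum>x\<in>S3. r x * pmf (mu e) x)"
    by (rule integral_measure_pmf_real) (use set_mu[OF e1(1)] in \<open>auto simp: S3_def\<close>)
  also have "\<dots> = (\<Sum>x\<in>S3. sqrt (w e x * w (-e) x))"
    by (intro sum.cong refl) (simp add: pmf_mu[OF e1(1)] r_def mult.commute sqrt_ratio w_pos[OF e])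
  also have "\<dots> = (1 + sqrt (1 - e^2)) / 2" by (rule BC_base[OF e])
  finally show ?thesis by simp
qed

lemma minsum:
  assumes e: "0 \<le> e" "e < 1" and n: "real n * e^2 \<le> 1"
  shows "1/8 \<le> (\<Sum>v\<in>U n. min (pmf (PP e n) v) (pmf (PP (-e) n) v))"
proof -
  have e1: "\<bar>e\<bar> \<le> 1" "\<bar>-e\<bar> \<le> 1" "\<bar>e\<bar> < 1" using e by auto
  have s1: "(\<Sum>v\<in>U n. pmf (PP e n) v) = 1" "(\<Sum>v\<in>U n. pmf (PP (-e) n) v) = 1"
    by (rule sum_pmf_eq_1[OF finite_U set_PP[OF e1(1)]], rule sum_pmf_eq_1[OF finite_U set_PP[OF e1(2)]])
  have e2: "e^2 \<le> 1" using e by (simp add: power_le_one)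
  have "1 - e^2 \<le> sqrt (1 - e^2)"
    using e2 by (intro real_le_rsqrt) (auto simp: power2_eq_square intro!: mult_left_le_one_le)
  hence base: "1 + (-(e^2/2)) \<le> (1 + sqrt (1 - e^2)) / 2" by simp
  have "1 + real n * (-(e^2/2)) \<le> (1 + (-(e^2/2)))^n"
    using e2 by (intro Bernoulli_inequality) simp
  also have "\<dots> \<le> ((1 + sqrt (1 - e^2)) / 2)^n"
    using base e2 by (intro power_mono) auto
  finally have "1/2 \<le> ((1 + sqrt (1 - e^2)) / 2)^n" using n by simp
  also have "\<dots> = (\<Sum>v\<in>U n. sqrt (pmf (PP e n) v * pmf (PP (-e) n) v))" by (rule BC[OF e1(3), symmetric])
  also have "\<dots> \<le> (\<Sum>v\<in>U n. 2 * min (pmf (PP e n) v) (pmf (PP (-e) n) v) + (pmf (PP e n) v + pmf (PP (-e) n) v)/8)"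
    by (intro sum_mono sqrt_min_bound) auto
  also have "\<dots> = 2 * (\<Sum>v\<in>U n. min (pmf (PP e n) v) (pmf (PP (-e) n) v)) + 1/4"
    using s1 by (simp add: sum.distrib sum_distrib_left sum_divide_distrib[symmetric])
  finally show ?thesis by simp
qed

lemma round_bound:
  assumes e: "0 \<le> e" "e \<le> 1" and D: "\<And>v. 0 \<le> D v \<and> D v \<le> 1"
  shows "measure_pmf.expectation (PP e n) (\<lambda>v. Gf e (D v)) + measure_pmf.expectation (PP (-e) n) (\<lambda>v. Gf (-e) (D v))
     + e/12 * (\<Sum>v\<in>U n. min (pmf (PP e n) v) (pmf (PP (-e) n) v)) \<le> Gf e (1/3) + Gf (-e) (2/3)"
proof -
  have e1: "\<bar>e\<bar> \<le> 1" "\<bar>-e\<bar> \<le> 1" using e by auto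
  define qp where "qp v = pmf (PP e n) v" for v
  define qm where "qm v = pmf (PP (-e) n) v" for v
  have s1: "(\<Sum>v\<in>U n. qp v) = 1" "(\<Sum>v\<in>U n. qm v) = 1" unfolding qp_def qm_def
    by (rule sum_pmf_eq_1[OF finite_U set_PP[OF e1(1)]], rule sum_pmf_eq_1[OF finite_U set_PP[OF e1(2)]])
  have E1: "measure_pmf.expectation (PP e n) (\<lambda>v. Gf e (D v)) = (\<Sum>v\<in>U n. Gf e (D v) * qp v)"
    unfolding qp_def by (rule integral_measure_pmf_real) (use set_PP[OF e1(1)] finite_U in auto)
  have E2: "measure_pmf.expectation (PP (-e) n) (\<lambda>v. Gf (-e) (D v)) = (\<Sum>v\<in>U n. Gf (-e) (D v) * qm v)"
    unfolding qm_def by (rule integral_measure_pmf_real) (use set_PP[OF e1(2)] finite_U in auto)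
  have pt: "Gf e (D v) * qp v + Gf (-e) (D v) * qm v + e/12 * min (qp v) (qm v)
         \<le> Gf e (1/3) * qp v + Gf (-e) (2/3) * qm v" for v
  proof -
    have g: "Gf e (D v) \<le> Gf e (1/3)" "Gf (-e) (D v) \<le> Gf (-e) (2/3)"
      "Gf e (D v) + Gf (-e) (D v) + e/12 \<le> Gf e (1/3) + Gf (-e) (2/3)"
      using Gf_ineq[OF e, of "D v"] D[of v] by auto
    have q: "0 \<le> qp v" "0 \<le> qm v" by (auto simp: qp_def qm_def)
    have "e/12 * min (qp v) (qm v) \<le> (Gf e (1/3) - Gf e (D v) + (Gf (-e) (2/3) - Gf (-e) (D v))) * min (qp v) (qm v)"
      using g q by (intro mult_right_mono) auto
    also have "\<dots> \<le> (Gf e (1/3) - Gf e (D v)) * qp v + (Gf (-e) (2/3) - Gf (-e) (D v)) * qm v"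
      using g q by (simp add: distrib_right) (intro add_mono mult_left_mono; simp)
    finally show ?thesis by (simp add: algebra_simps)
  qed
  have "(\<Sum>v\<in>U n. Gf e (D v) * qp v) + (\<Sum>v\<in>U n. Gf (-e) (D v) * qm v) + e/12 * (\<Sum>v\<in>U n. min (qp v) (qm v))
      = (\<Sum>v\<in>U n. Gf e (D v) * qp v + Gf (-e) (D v) * qm v + e/12 * min (qp v) (qm v))"
    by (simp add: sum.distrib sum_distrib_left)
  also have "\<dots> \<le> (\<Sum>v\<in>U n. Gf e (1/3) * qp v + Gf (-e) (2/3) * qm v)"
    by (intro sum_mono pt)
  also have "\<dots> = Gf e (1/3) + Gf (-e) (2/3)"
    using s1 by (simp add: sum.distrib sum_distrib_left[symmetric])
  finally show ?thesis using E1 E2 by (simp add: qp_def qm_def)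
qed



lemma alg_pmf:
  assumes e: "\<bar>e\<bar> \<le> 1"
    and d: "\<And>t v v'. t < T \<Longrightarrow> (\<forall>i<2*t. v i = v' i) \<Longrightarrow> d t v = d t v'"
  shows "(\<integral>\<^sup>+v. ennreal (\<Sum>t<T. gft (d t v) (v (2*t)) (v (2*t+1))) \<partial>PP e (2*T))
       = ennreal (\<Sum>t<T. measure_pmf.expectation (PP e (2*t)) (\<lambda>v. Gf e (d t v)))"
proof -
  have "(\<integral>\<^sup>+v. ennreal (\<Sum>t<T. gft (d t v) (v (2*t)) (v (2*t+1))) \<partial>PP e (2*T))
      = (\<integral>\<^sup>+v. (\<Sum>t<T. ennreal (gft (d t v) (v (2*t)) (v (2*t+1)))) \<partial>PP e (2*T))"
    by (simp add: gft_nonneg)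
  also have "\<dots> = (\<Sum>t<T. \<integral>\<^sup>+v. ennreal (gft (d t v) (v (2*t)) (v (2*t+1))) \<partial>PP e (2*T))"
    by (rule nn_integral_sum) simp
  also have "\<dots> = (\<Sum>t<T. \<integral>\<^sup>+v. ennreal (Gf e (d t v)) \<partial>PP e (2*t))"
    by (intro sum.cong refl marg[OF e]) (auto intro: d)
  also have "\<dots> = (\<Sum>t<T. ennreal (measure_pmf.expectation (PP e (2*t)) (\<lambda>v. Gf e (d t v))))"
    by (intro sum.cong refl nnE finite_set_PP e Gf_nonneg)
  also have "\<dots> = ennreal (\<Sum>t<T. measure_pmf.expectation (PP e (2*t)) (\<lambda>v. Gf e (d t v)))"
    by (intro sum_ennreal integral_nonneg_AE AE_pmfI Gf_nonneg e)
  finally show ?thesis .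
qed

lemma det_bound:
  assumes e: "0 \<le> e" "e < 1" and Te: "real (2*T) * e^2 \<le> 1"
    and D: "\<And>t v. 0 \<le> d t v \<and> d t v \<le> 1"
  shows "(\<Sum>t<T. measure_pmf.expectation (PP e (2*t)) (\<lambda>v. Gf e (d t v)))
       + (\<Sum>t<T. measure_pmf.expectation (PP (-e) (2*t)) (\<lambda>v. Gf (-e) (d t v)))
       \<le> real T * (Gf e (1/3) + Gf (-e) (2/3)) - real T * e / 96"
proof -
  have r: "measure_pmf.expectation (PP e (2*t)) (\<lambda>v. Gf e (d t v))
       + measure_pmf.expectation (PP (-e) (2*t)) (\<lambda>v. Gf (-e) (d t v))
       \<le> (Gf e (1/3) + Gf (-e) (2/3)) - e / 96" if t: "t < T" for t
  proof -
    have "real (2*t) * e^2 \<le> real (2*T) * e^2"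
      using t by (intro mult_right_mono) auto
    hence "1/8 \<le> (\<Sum>v\<in>U (2*t). min (pmf (PP e (2*t)) v) (pmf (PP (-e) (2*t)) v))"
      using Te by (intro minsum e) auto
    hence "e/12 * (1/8) \<le> e/12 * (\<Sum>v\<in>U (2*t). min (pmf (PP e (2*t)) v) (pmf (PP (-e) (2*t)) v))"
      using e by (intro mult_left_mono) auto
    moreover have "measure_pmf.expectation (PP e (2*t)) (\<lambda>v. Gf e (d t v))
       + measure_pmf.expectation (PP (-e) (2*t)) (\<lambda>v. Gf (-e) (d t v))
       + e/12 * (\<Sum>v\<in>U (2*t). min (pmf (PP e (2*t)) v) (pmf (PP (-e) (2*t)) v))
       \<le> Gf e (1/3) + Gf (-e) (2/3)"
      using e by (intro round_bound D) auto
    ultimately show ?thesis by simp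
  qed
  have "(\<Sum>t<T. measure_pmf.expectation (PP e (2*t)) (\<lambda>v. Gf e (d t v)))
       + (\<Sum>t<T. measure_pmf.expectation (PP (-e) (2*t)) (\<lambda>v. Gf (-e) (d t v)))
     = (\<Sum>t<T. measure_pmf.expectation (PP e (2*t)) (\<lambda>v. Gf e (d t v))
       + measure_pmf.expectation (PP (-e) (2*t)) (\<lambda>v. Gf (-e) (d t v)))"
    by (simp add: sum.distrib)
  also have "\<dots> \<le> (\<Sum>t<T. (Gf e (1/3) + Gf (-e) (2/3)) - e / 96)"
    by (intro sum_mono r) auto
  also have "\<dots> = real T * (Gf e (1/3) + Gf (-e) (2/3)) - real T * e / 96"
    by (simp add: algebra_simps)
  finally show ?thesis .
qed

definition nu :: "real \<Rightarrow> real measure" where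
  "nu e = distr (measure_pmf (mu e)) borel (\<lambda>x. x)"

lemma sets_nu[simp]: "sets (nu e) = sets borel"
  by (simp add: nu_def)

lemma space_nu[simp]: "space (nu e) = UNIV"
  by (simp add: nu_def)

lemma prob_nu: "prob_space (nu e)"
  unfolding nu_def by (rule measure_pmf.prob_space_distr) simp

lemma emeasure_nu: "A \<in> sets borel \<Longrightarrow> emeasure (nu e) A = emeasure (measure_pmf (mu e)) A"
  unfolding nu_def by (subst emeasure_distr) auto

lemma nu_dist: "\<bar>e\<bar> \<le> 1 \<Longrightarrow> nu e \<in> prob_dists_01"
proof -
  assume e: "\<bar>e\<bar> \<le> 1"
  have "emeasure (measure_pmf (mu e)) {0..1} = 1"
    using set_mu[OF e]
    by (subst measure_pmf.emeasure_eq_1_AE) (auto simp: AE_measure_pmf_iff S3_def)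
  hence "emeasure (nu e) {0..1} = 1" by (simp add: emeasure_nu)
  hence "measure (nu e) {0..1} = 1" by (simp add: measure_def)
  thus ?thesis using prob_nu by (simp add: prob_dists_01_def)
qed

lemma val_link:
  assumes e: "\<bar>e\<bar> \<le> 1"
  shows "val_space T (nu e) = distr (measure_pmf (PP e (2*T))) (PiM {..<2*T} (\<lambda>_. nu e)) (\<lambda>f. restrict f {..<2*T})"
proof -
  interpret product_sigma_finite "\<lambda>_. nu e"
    using prob_space_imp_sigma_finite[OF prob_nu] by (simp add: product_sigma_finite_def)
  have "distr (measure_pmf (PP e (2*T))) (PiM {..<2*T} (\<lambda>_. nu e)) (\<lambda>f. restrict f {..<2*T}) = PiM {..<2*T} (\<lambda>_. nu e)"
  proof (rule PiM_eqI)
    fix A assume A: "\<And>i. i \<in> {..<2*T} \<Longrightarrow> A i \<in> sets (nu e)"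
    have meas: "(\<lambda>f. restrict f {..<2*T}) \<in> measurable (measure_pmf (PP e (2*T))) (PiM {..<2*T} (\<lambda>_. nu e))"
      by (simp add: space_PiM)
    have pre: "(\<lambda>f. restrict f {..<2*T}) -` PiE {..<2*T} A = Pi {..<2*T} A"
      by (auto simp: PiE_def Pi_def)
    have "emeasure (distr (measure_pmf (PP e (2*T))) (PiM {..<2*T} (\<lambda>_. nu e)) (\<lambda>f. restrict f {..<2*T})) (PiE {..<2*T} A)
        = emeasure (measure_pmf (PP e (2*T))) (Pi {..<2*T} A)"
      using A by (subst emeasure_distr[OF meas]) (auto simp: pre intro!: sets_PiM_I_finite)
    also have "\<dots> = ennreal (\<Prod>i<2*T. measure_pmf.prob (mu e) (A i))"
      by (simp add: measure_pmf.emeasure_eq_measure measure_Pi_pmf_Pi)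
    also have "\<dots> = (\<Prod>i<2*T. ennreal (measure_pmf.prob (mu e) (A i)))"
      by (rule prod_ennreal[symmetric]) auto
    also have "\<dots> = (\<Prod>i<2*T. emeasure (nu e) (A i))"
      using A by (intro prod.cong refl) (simp add: emeasure_nu measure_pmf.emeasure_eq_measure)
    finally show "emeasure (distr (measure_pmf (PP e (2*T))) (PiM {..<2*T} (\<lambda>_. nu e)) (\<lambda>f. restrict f {..<2*T})) (PiE {..<2*T} A)
        = (\<Prod>i<2*T. emeasure (nu e) (A i))" .
  qed simp_all
  thus ?thesis by (simp add: val_space_def)
qed



lemma comp_meas:
  assumes "i \<in> I" "sets N = sets borel"
  shows "(\<lambda>v. v i) \<in> borel_measurable (PiM I (\<lambda>_. N))"
proof -
  have "(\<lambda>v. v i) \<in> measurable (PiM I (\<lambda>_. N)) N"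
    using measurable_component_singleton[OF assms(1), of "\<lambda>_. N"] by simp
  thus ?thesis using assms(2) by (simp cong: measurable_cong_sets)
qed

lemma gft_meas[measurable]:
  assumes [measurable]: "f \<in> borel_measurable M" "g \<in> borel_measurable M" "h \<in> borel_measurable M"
  shows "(\<lambda>x. gft (f x) (g x) (h x)) \<in> borel_measurable M"
  unfolding gft_def by measurable

lemma bench_meas:
  fixes T :: nat
  assumes "sets N = sets borel"
  shows "(\<lambda>v. \<Sum>t<T. gft p (v (2*t)) (v (2*t+1))) \<in> borel_measurable (PiM {..<2*T} (\<lambda>_. N))"
proof -
  have "(\<lambda>v. gft p (v (2*t)) (v (2*t+1))) \<in> borel_measurable (PiM {..<2*T} (\<lambda>_. N))" if "t < T" for t
    using that by (intro gft_meas comp_meas assms) auto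
  thus ?thesis by (intro borel_measurable_sum) auto
qed

lemma bench:
  assumes e: "\<bar>e\<bar> \<le> 1"
  shows "(\<integral>v. (\<Sum>t<T. gft p (v (2*t)) (v (2*t+1))) \<partial>val_space T (nu e)) = real T * Gf e p"
proof -
  have meas: "(\<lambda>f. restrict f {..<2*T}) \<in> measurable (measure_pmf (PP e (2*T))) (PiM {..<2*T} (\<lambda>_. nu e))"
    by (simp add: space_PiM)
  have "(\<integral>v. (\<Sum>t<T. gft p (v (2*t)) (v (2*t+1))) \<partial>val_space T (nu e))
      = measure_pmf.expectation (PP e (2*T)) (\<lambda>f. \<Sum>t<T. gft p (restrict f {..<2*T} (2*t)) (restrict f {..<2*T} (2*t+1)))"
    unfolding val_link[OF e] by (rule integral_distr[OF meas bench_meas]) simp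
  also have "\<dots> = measure_pmf.expectation (PP e (2*T)) (\<lambda>f. \<Sum>t<T. gft p (f (2*t)) (f (2*t+1)))"
    by (intro Bochner_Integration.integral_cong refl sum.cong) auto
  finally have I: "(\<integral>v. (\<Sum>t<T. gft p (v (2*t)) (v (2*t+1))) \<partial>val_space T (nu e))
      = measure_pmf.expectation (PP e (2*T)) (\<lambda>f. \<Sum>t<T. gft p (f (2*t)) (f (2*t+1)))" .
  have "ennreal (measure_pmf.expectation (PP e (2*T)) (\<lambda>f. \<Sum>t<T. gft p (f (2*t)) (f (2*t+1))))
      = (\<integral>\<^sup>+f. ennreal (\<Sum>t<T. gft p (f (2*t)) (f (2*t+1))) \<partial>PP e (2*T))"
    by (rule nnE[symmetric]) (auto intro: finite_set_PP e sum_nonneg gft_nonneg)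
  also have "\<dots> = ennreal (\<Sum>t<T. measure_pmf.expectation (PP e (2*t)) (\<lambda>v. Gf e p))"
    by (rule alg_pmf[OF e]) auto
  also have "(\<Sum>t<T. measure_pmf.expectation (PP e (2*t)) (\<lambda>v. Gf e p)) = real T * Gf e p"
    by simp
  finally have "ennreal (measure_pmf.expectation (PP e (2*T)) (\<lambda>f. \<Sum>t<T. gft p (f (2*t)) (f (2*t+1))))
      = ennreal (real T * Gf e p)" .
  moreover have "0 \<le> measure_pmf.expectation (PP e (2*T)) (\<lambda>f. \<Sum>t<T. gft p (f (2*t)) (f (2*t+1)))"
    by (intro integral_nonneg_AE AE_pmfI sum_nonneg gft_nonneg)
  moreover have "0 \<le> real T * Gf e p" using Gf_nonneg[OF e] by simp
  ultimately show ?thesis using I by simp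
qed

lemma alg_meas:
  assumes R: "sets R = sets borel" and A: "full_feedback_alg T R alg" and N: "sets N = sets borel"
  shows "(\<lambda>\<omega>. \<Sum>t<T. gft (alg t (fst \<omega>) (snd \<omega>)) (fst \<omega> (2*t)) (fst \<omega> (2*t+1)))
          \<in> borel_measurable (PiM {..<2*T} (\<lambda>_. N) \<Otimes>\<^sub>M R)"
proof -
  have s: "sets (PiM {..<2*T} (\<lambda>_. N) \<Otimes>\<^sub>M R) = sets (PiM {..<2*T} (\<lambda>_. borel) \<Otimes>\<^sub>M R)"
    by (intro sets_pair_measure_cong sets_PiM_cong refl N)
  have "(\<lambda>\<omega>. gft (alg t (fst \<omega>) (snd \<omega>)) (fst \<omega> (2*t)) (fst \<omega> (2*t+1)))
          \<in> borel_measurable (PiM {..<2*T} (\<lambda>_. borel) \<Otimes>\<^sub>M R)" if t: "t < T" for t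
  proof (intro gft_meas)
    show "(\<lambda>\<omega>. alg t (fst \<omega>) (snd \<omega>)) \<in> borel_measurable (PiM {..<2*T} (\<lambda>_. borel) \<Otimes>\<^sub>M R)"
      using A t by (auto simp: full_feedback_alg_def)
    show "(\<lambda>\<omega>. fst \<omega> (2*t)) \<in> borel_measurable (PiM {..<2*T} (\<lambda>_. borel) \<Otimes>\<^sub>M R)"
      using t by (intro measurable_compose[OF measurable_fst comp_meas]) auto
    show "(\<lambda>\<omega>. fst \<omega> (2*t+1)) \<in> borel_measurable (PiM {..<2*T} (\<lambda>_. borel) \<Otimes>\<^sub>M R)"
      using t by (intro measurable_compose[OF measurable_fst comp_meas]) auto
  qed
  hence "(\<lambda>\<omega>. \<Sum>t<T. gft (alg t (fst \<omega>) (snd \<omega>)) (fst \<omega> (2*t)) (fst \<omega> (2*t+1)))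
          \<in> borel_measurable (PiM {..<2*T} (\<lambda>_. borel) \<Otimes>\<^sub>M R)"
    by (intro borel_measurable_sum) auto
  thus ?thesis using s by (simp cong: measurable_cong_sets)
qed



definition Falg :: "nat \<Rightarrow> (nat \<Rightarrow> (nat \<Rightarrow> real) \<Rightarrow> real \<Rightarrow> real) \<Rightarrow> (nat \<Rightarrow> real) \<times> real \<Rightarrow> real" where
  "Falg T alg \<omega> = (\<Sum>t<T. gft (alg t (fst \<omega>) (snd \<omega>)) (fst \<omega> (2*t)) (fst \<omega> (2*t+1)))"

lemma Falg_nonneg: "0 \<le> Falg T alg \<omega>"
  unfolding Falg_def by (intro sum_nonneg gft_nonneg)

lemma alg_link:
  assumes e: "\<bar>e\<bar> \<le> 1" and Rp: "prob_space R" and Rs: "sets R = sets borel"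
    and A: "full_feedback_alg T R alg"
  shows "(\<integral>\<omega>. Falg T alg \<omega> \<partial>full_space T (nu e) R)
           = enn2real (\<integral>\<^sup>+u. (\<integral>\<^sup>+v. ennreal (Falg T alg (restrict v {..<2*T}, u)) \<partial>PP e (2*T)) \<partial>R)"
    and "(\<lambda>u. \<integral>\<^sup>+v. ennreal (Falg T alg (restrict v {..<2*T}, u)) \<partial>PP e (2*T)) \<in> borel_measurable R"
proof -
  let ?P = "measure_pmf (PP e (2*T))"
  let ?V = "PiM {..<2*T} (\<lambda>_. nu e)"
  have sfR: "sigma_finite_measure R" by (rule prob_space_imp_sigma_finite[OF Rp])
  have sfP: "sigma_finite_measure ?P" by (rule prob_space_imp_sigma_finite[OF measure_pmf.prob_space_axioms])
  interpret PR: pair_sigma_finite ?P R by (simp add: pair_sigma_finite_def sfR sfP)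
  have meas: "(\<lambda>f. restrict f {..<2*T}) \<in> measurable ?P ?V"
    by (simp add: space_PiM)
  have mapm: "(\<lambda>(x,y). (restrict x {..<2*T}, y)) \<in> measurable (?P \<Otimes>\<^sub>M R) (?V \<Otimes>\<^sub>M R)"
    unfolding case_prod_unfold by (intro measurable_Pair measurable_compose[OF measurable_fst meas] measurable_snd)
  have Fm: "Falg T alg \<in> borel_measurable (?V \<Otimes>\<^sub>M R)"
    using alg_meas[OF Rs A, of "nu e"] unfolding Falg_def by simp
  have Fm': "(\<lambda>\<omega>. ennreal (Falg T alg \<omega>)) \<in> borel_measurable (?V \<Otimes>\<^sub>M R)"
    using Fm by measurable
  have full: "full_space T (nu e) R = distr (?P \<Otimes>\<^sub>M R) (?V \<Otimes>\<^sub>M R) (\<lambda>(x,y). (restrict x {..<2*T}, y))"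
  proof -
    have "distr ?P ?V (\<lambda>f. restrict f {..<2*T}) \<Otimes>\<^sub>M distr R R (\<lambda>x. x)
        = distr (?P \<Otimes>\<^sub>M R) (?V \<Otimes>\<^sub>M R) (\<lambda>(x,y). (restrict x {..<2*T}, y))"
      by (rule pair_measure_distr[OF meas]) (simp_all add: sfR)
    thus ?thesis by (simp add: full_space_def val_link[OF e, symmetric] val_space_def)
  qed
  have comp: "(\<lambda>\<omega>. ennreal (Falg T alg (case \<omega> of (x,y) \<Rightarrow> (restrict x {..<2*T}, y)))) \<in> borel_measurable (?P \<Otimes>\<^sub>M R)"
    by (rule measurable_compose[OF mapm Fm'])
  have "(\<integral>\<omega>. Falg T alg \<omega> \<partial>full_space T (nu e) R) = enn2real (\<integral>\<^sup>+\<omega>. ennreal (Falg T alg \<omega>) \<partial>full_space T (nu e) R)"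
    by (rule integral_eq_nn_integral)
       (use Fm in \<open>simp_all add: full_space_def val_space_def Falg_nonneg\<close>)
  also have "(\<integral>\<^sup>+\<omega>. ennreal (Falg T alg \<omega>) \<partial>full_space T (nu e) R)
      = (\<integral>\<^sup>+\<omega>. ennreal (Falg T alg (case \<omega> of (x,y) \<Rightarrow> (restrict x {..<2*T}, y))) \<partial>(?P \<Otimes>\<^sub>M R))"
    unfolding full by (rule nn_integral_distr[OF mapm]) (use Fm' in simp)
  also have "\<dots> = (\<integral>\<^sup>+u. (\<integral>\<^sup>+v. ennreal (Falg T alg (restrict v {..<2*T}, u)) \<partial>?P) \<partial>R)"
    by (subst PR.nn_integral_snd[OF comp, symmetric]) simp
  finally show "(\<integral>\<omega>. Falg T alg \<omega> \<partial>full_space T (nu e) R)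
           = enn2real (\<integral>\<^sup>+u. (\<integral>\<^sup>+v. ennreal (Falg T alg (restrict v {..<2*T}, u)) \<partial>PP e (2*T)) \<partial>R)" .
  have "(\<lambda>(u,v). ennreal (Falg T alg (case (v,u) of (x,y) \<Rightarrow> (restrict x {..<2*T}, y)))) \<in> borel_measurable (R \<Otimes>\<^sub>M ?P)"
    using measurable_pair_swap[OF comp] by simp
  from sigma_finite_measure.borel_measurable_nn_integral_fst[OF sfP this]
  show "(\<lambda>u. \<integral>\<^sup>+v. ennreal (Falg T alg (restrict v {..<2*T}, u)) \<partial>PP e (2*T)) \<in> borel_measurable R"
    by simp
qed



lemma AE01:
  fixes T :: nat
  assumes nu: "\<nu> \<in> prob_dists_01"
  shows "AE v in PiM {..<2*T} (\<lambda>_. \<nu>). v \<in> PiE {..<2*T} (\<lambda>_. {0..1})"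
proof -
  have np: "prob_space \<nu>" and ns: "sets \<nu> = sets borel" and n1: "measure \<nu> {0..1} = 1"
    using nu by (auto simp: prob_dists_01_def)
  interpret N: prob_space \<nu> by (rule np)
  interpret V: prob_space "PiM {..<2*T} (\<lambda>_. \<nu>)" by (rule prob_space_PiM) (rule np)
  interpret PS: product_sigma_finite "\<lambda>_. \<nu>"
    using prob_space_imp_sigma_finite[OF np] by (simp add: product_sigma_finite_def)
  have e1: "emeasure \<nu> {0..1} = 1"
    using n1 N.emeasure_eq_measure by simp
  have "emeasure (PiM {..<2*T} (\<lambda>_. \<nu>)) (PiE {..<2*T} (\<lambda>_. {0..1})) = (\<Prod>i<2*T. emeasure \<nu> {0..1})"
    by (rule PS.emeasure_PiM) (simp_all add: ns)
  also have "\<dots> = 1" by (simp add: e1)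
  finally have "measure (PiM {..<2*T} (\<lambda>_. \<nu>)) (PiE {..<2*T} (\<lambda>_. {0..1})) = 1"
    by (simp add: measure_def)
  thus ?thesis by (rule V.AE_prob_1)
qed

lemma gft_le1: "0 \<le> a \<Longrightarrow> a \<le> 1 \<Longrightarrow> 0 \<le> b \<Longrightarrow> b \<le> 1 \<Longrightarrow> gft p a b \<le> 1"
  by (simp add: gft_def max_def min_def)

lemma bench_le:
  assumes nu: "\<nu> \<in> prob_dists_01"
  shows "(\<integral>v. (\<Sum>t<T. gft p (v (2*t)) (v (2*t+1))) \<partial>val_space T \<nu>) \<le> real T"
proof -
  have np: "prob_space \<nu>" and ns: "sets \<nu> = sets borel"
    using nu by (auto simp: prob_dists_01_def)
  let ?V = "PiM {..<2*T} (\<lambda>_. \<nu>)"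
  interpret V: prob_space ?V by (rule prob_space_PiM) (rule np)
  have m: "(\<lambda>v. \<Sum>t<T. gft p (v (2*t)) (v (2*t+1))) \<in> borel_measurable ?V"
    by (rule bench_meas[OF ns])
  have pt: "ennreal (\<Sum>t<T. gft p (v (2*t)) (v (2*t+1))) \<le> ennreal (real T)"
    if v: "v \<in> PiE {..<2*T} (\<lambda>_. {0..1})" for v
  proof -
    have g1: "gft p (v (2*t)) (v (2*t+1)) \<le> 1" if t: "t < T" for t
    proof (rule gft_le1)
      have "v (2*t) \<in> {0..1}" using PiE_mem[OF v, of "2*t"] t by simp
      thus "0 \<le> v (2*t)" "v (2*t) \<le> 1" by auto
      have "v (2*t+1) \<in> {0..1}" using PiE_mem[OF v, of "2*t+1"] t by simp
      thus "0 \<le> v (2*t+1)" "v (2*t+1) \<le> 1" by auto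
    qed
    have "(\<Sum>t<T. gft p (v (2*t)) (v (2*t+1))) \<le> (\<Sum>t<T. (1::real))"
      by (rule sum_mono) (rule g1, simp)
    hence "(\<Sum>t<T. gft p (v (2*t)) (v (2*t+1))) \<le> real T" by simp
    thus ?thesis by (rule ennreal_leI)
  qed
  have "(\<integral>\<^sup>+v. ennreal (\<Sum>t<T. gft p (v (2*t)) (v (2*t+1))) \<partial>?V) \<le> (\<integral>\<^sup>+v. ennreal (real T) \<partial>?V)"
    by (rule nn_integral_mono_AE, rule AE_mp[OF AE01[OF nu]], rule AE_I2) (blast intro: pt)
  also have "\<dots> = ennreal (real T)" using V.emeasure_space_1 by simp
  finally have le: "(\<integral>\<^sup>+v. ennreal (\<Sum>t<T. gft p (v (2*t)) (v (2*t+1))) \<partial>?V) \<le> ennreal (real T)" .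
  have "(\<integral>v. (\<Sum>t<T. gft p (v (2*t)) (v (2*t+1))) \<partial>?V)
      = enn2real (\<integral>\<^sup>+v. ennreal (\<Sum>t<T. gft p (v (2*t)) (v (2*t+1))) \<partial>?V)"
    by (rule integral_eq_nn_integral[OF m]) (intro AE_I2 sum_nonneg gft_nonneg)
  also have "\<dots> \<le> real T" by (rule enn2real_leI[OF _ le]) simp
  finally show ?thesis by (simp add: val_space_def)
qed

lemma regret_le:
  assumes nu: "\<nu> \<in> prob_dists_01"
  shows "regret T \<nu> R alg \<le> real T"
proof -
  have sup: "(SUP p\<in>{0..1::real}. \<integral>v. (\<Sum>t<T. gft p (v (2*t)) (v (2*t+1))) \<partial>val_space T \<nu>) \<le> real T"
    by (rule cSUP_least) (simp, rule bench_le[OF nu])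
  have "0 \<le> (\<integral>\<omega>. (\<Sum>t<T. gft (alg t (fst \<omega>) (snd \<omega>)) (fst \<omega> (2*t)) (fst \<omega> (2*t+1))) \<partial>full_space T \<nu> R)"
    by (intro integral_nonneg_AE AE_I2 sum_nonneg gft_nonneg)
  with sup show ?thesis unfolding regret_def by linarith
qed



lemma regret_Falg:
  "regret T \<nu> R alg = (SUP p\<in>{0..1::real}. \<integral>v. (\<Sum>t<T. gft p (v (2*t)) (v (2*t+1))) \<partial>val_space T \<nu>)
     - (\<integral>\<omega>. Falg T alg \<omega> \<partial>full_space T \<nu> R)"
  by (simp add: regret_def Falg_def)

lemma regret_lower:
  assumes e: "\<bar>e\<bar> \<le> 1" and G: "\<And>p. p \<in> {0..1} \<Longrightarrow> Gf e p \<le> Gf e q" and q: "q \<in> {0..1}"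
  shows "real T * Gf e q - (\<integral>\<omega>. Falg T alg \<omega> \<partial>full_space T (nu e) R) \<le> regret T (nu e) R alg"
proof -
  have "real T * Gf e q \<le> (SUP p\<in>{0..1::real}. \<integral>v. (\<Sum>t<T. gft p (v (2*t)) (v (2*t+1))) \<partial>val_space T (nu e))"
  proof -
    have "(\<integral>v. (\<Sum>t<T. gft q (v (2*t)) (v (2*t+1))) \<partial>val_space T (nu e))
        \<le> (SUP p\<in>{0..1::real}. \<integral>v. (\<Sum>t<T. gft p (v (2*t)) (v (2*t+1))) \<partial>val_space T (nu e))"
    proof (rule cSUP_upper[OF q])
      show "bdd_above ((\<lambda>p. \<integral>v. (\<Sum>t<T. gft p (v (2*t)) (v (2*t+1))) \<partial>val_space T (nu e)) ` {0..1})"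
      proof (rule bdd_aboveI2)
        fix p :: real assume "p \<in> {0..1}"
        have b: "(\<integral>v. (\<Sum>t<T. gft p (v (2*t)) (v (2*t+1))) \<partial>val_space T (nu e)) = real T * Gf e p"
          by (rule bench[OF e])
        show "(\<integral>v. (\<Sum>t<T. gft p (v (2*t)) (v (2*t+1))) \<partial>val_space T (nu e)) \<le> real T * Gf e q"
          unfolding b using G[OF \<open>p \<in> {0..1}\<close>] by (intro mult_left_mono) auto
      qed
    qed
    moreover have "(\<integral>v. (\<Sum>t<T. gft q (v (2*t)) (v (2*t+1))) \<partial>val_space T (nu e)) = real T * Gf e q"
      by (rule bench[OF e])
    ultimately show ?thesis by linarith
  qed
  thus ?thesis unfolding regret_Falg by linarith
qed

theorem theorem5p3:
  shows "\<exists>c>0. \<forall>T::nat. \<forall>R alg.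
           prob_space R \<and> sets R = sets borel \<and> full_feedback_alg T R alg \<longrightarrow>
           (SUP \<nu>\<in>prob_dists_01. regret T \<nu> R alg) \<ge> c * sqrt (real T)"
proof (intro exI[of _ "1/300"] conjI allI impI)
  show "(0::real) < 1/300" by simp
  fix T :: nat and R alg
  assume "prob_space R \<and> sets R = sets borel \<and> full_feedback_alg T R alg"
  hence Rp: "prob_space R" and Rs: "sets R = sets borel" and A: "full_feedback_alg T R alg" by auto
  interpret R: prob_space R by (rule Rp)
  define e where "e = 1 / sqrt (real (2*T))"
  have e0: "0 \<le> e" by (simp add: e_def)
  have e1: "e < 1"
  proof (cases "T = 0")
    case True thus ?thesis by (simp add: e_def)
  next
    case False
    hence "1 < sqrt (real (2*T))" by simp
    thus ?thesis by (simp add: e_def)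
  qed
  have eT: "real (2*T) * e^2 \<le> 1"
  proof (cases "T = 0")
    case True thus ?thesis by (simp add: e_def)
  next
    case False
    thus ?thesis by (simp add: e_def power_divide)
  qed
  have ea: "\<bar>e\<bar> \<le> 1" "\<bar>-e\<bar> \<le> 1" using e0 e1 by auto
  define K0 where "K0 = Gf e (1/3) + Gf (-e) (2/3)"
  define B where "B = real T * K0 - real T * e / 96"
  define d where "d u t v = alg t (restrict v {..<2*T}) u" for u t v
  have dD: "0 \<le> d u t v \<and> d u t v \<le> 1" if "t < T" for u t v
    using A that by (auto simp: d_def full_feedback_alg_def)
  have ddep: "d u t v = d u t v'" if "t < T" "\<forall>i<2*t. v i = v' i" for u t v v'
  proof -
    have "\<forall>i<2*t. restrict v {..<2*T} i = restrict v' {..<2*T} i" using that by auto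
    thus ?thesis using A that(1) unfolding d_def full_feedback_alg_def by blast
  qed
  define dd where "dd u t v = (if t < T then d u t v else 0)" for u t v
  have ddD: "0 \<le> dd u t v \<and> dd u t v \<le> 1" for u t v using dD by (simp add: dd_def)
  have dddep: "dd u t v = dd u t v'" if "t < T" "\<forall>i<2*t. v i = v' i" for u t v v'
    using ddep[OF that] that(1) by (simp add: dd_def)
  define S where "S s u = (\<Sum>t<T. measure_pmf.expectation (PP s (2*t)) (\<lambda>v. Gf s (dd u t v)))" for s u
  have S0: "0 \<le> S s u" if "\<bar>s\<bar> \<le> 1" for s u
    unfolding S_def by (intro sum_nonneg integral_nonneg_AE AE_pmfI Gf_nonneg that)
  have Sb: "S e u + S (-e) u \<le> B" for u
    unfolding S_def B_def K0_def by (rule det_bound[OF e0 e1 eT ddD])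
  have B0: "0 \<le> B" using Sb[of 0] S0[OF ea(1), of 0] S0[OF ea(2), of 0] by linarith
  define I where "I s u = (\<integral>\<^sup>+v. ennreal (Falg T alg (restrict v {..<2*T}, u)) \<partial>PP s (2*T))" for s u
  have IS: "I s u = ennreal (S s u)" if s: "\<bar>s\<bar> \<le> 1" for s u
  proof -
    have "I s u = (\<integral>\<^sup>+v. ennreal (\<Sum>t<T. gft (dd u t v) (v (2*t)) (v (2*t+1))) \<partial>PP s (2*T))"
      unfolding I_def Falg_def by (intro nn_integral_cong arg_cong[where f=ennreal] sum.cong refl) (simp add: dd_def d_def)
    also have "\<dots> = ennreal (S s u)"
      unfolding S_def by (rule alg_pmf[OF s]) (rule dddep)
    finally show ?thesis .
  qed
  have Im: "I s \<in> borel_measurable R" if "\<bar>s\<bar> \<le> 1" for s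
    unfolding I_def using alg_link(2)[OF that Rp Rs A] .
  have Ii: "(\<integral>\<omega>. Falg T alg \<omega> \<partial>full_space T (nu s) R) = enn2real (\<integral>\<^sup>+u. I s u \<partial>R)" if "\<bar>s\<bar> \<le> 1" for s
    unfolding I_def using alg_link(1)[OF that Rp Rs A] .
  have sumI: "(\<integral>\<^sup>+u. I e u \<partial>R) + (\<integral>\<^sup>+u. I (-e) u \<partial>R) \<le> ennreal B"
  proof -
    have "(\<integral>\<^sup>+u. I e u \<partial>R) + (\<integral>\<^sup>+u. I (-e) u \<partial>R) = (\<integral>\<^sup>+u. I e u + I (-e) u \<partial>R)"
      by (rule nn_integral_add[symmetric]) (use Im[OF ea(1)] Im[OF ea(2)] in auto)
    also have "\<dots> \<le> (\<integral>\<^sup>+u. ennreal B \<partial>R)"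
    proof (rule nn_integral_mono)
      fix u
      have "I e u + I (-e) u = ennreal (S e u + S (-e) u)"
        using IS[OF ea(1)] IS[OF ea(2)] S0[OF ea(1)] S0[OF ea(2)] by (simp add: ennreal_plus)
      also have "\<dots> \<le> ennreal B" by (rule ennreal_leI[OF Sb])
      finally show "I e u + I (-e) u \<le> ennreal B" .
    qed
    also have "\<dots> = ennreal B" using R.emeasure_space_1 by simp
    finally show ?thesis .
  qed
  have fin: "(\<integral>\<^sup>+u. I e u \<partial>R) < top" "(\<integral>\<^sup>+u. I (-e) u \<partial>R) < top"
    using sumI by (auto simp: top_unique add_top intro: le_less_trans[OF _ ennreal_less_top] order.trans[OF add_increasing2[OF zero_le]] order.trans[OF add_increasing[OF zero_le]])
  have sumG: "(\<integral>\<omega>. Falg T alg \<omega> \<partial>full_space T (nu e) R) + (\<integral>\<omega>. Falg T alg \<omega> \<partial>full_space T (nu (-e)) R) \<le> B"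
  proof -
    have "(\<integral>\<omega>. Falg T alg \<omega> \<partial>full_space T (nu e) R) + (\<integral>\<omega>. Falg T alg \<omega> \<partial>full_space T (nu (-e)) R)
        = enn2real ((\<integral>\<^sup>+u. I e u \<partial>R) + (\<integral>\<^sup>+u. I (-e) u \<partial>R))"
      using Ii[OF ea(1)] Ii[OF ea(2)] fin by (simp add: enn2real_plus)
    also have "\<dots> \<le> B" by (rule enn2real_leI[OF B0 sumI])
    finally show ?thesis .
  qed
  have Gq: "Gf e p \<le> Gf e (1/3)" "Gf (-e) p \<le> Gf (-e) (2/3)" if "p \<in> {0..1}" for p
    using Gf_ineq[OF e0 _ , of p] e1 that by auto
  have r1: "real T * Gf e (1/3) - (\<integral>\<omega>. Falg T alg \<omega> \<partial>full_space T (nu e) R) \<le> regret T (nu e) R alg"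
    by (rule regret_lower[OF ea(1)]) (auto intro: Gq)
  have r2: "real T * Gf (-e) (2/3) - (\<integral>\<omega>. Falg T alg \<omega> \<partial>full_space T (nu (-e)) R) \<le> regret T (nu (-e)) R alg"
    by (rule regret_lower[OF ea(2)]) (auto intro: Gq)
  have sumr: "real T * e / 96 \<le> regret T (nu e) R alg + regret T (nu (-e)) R alg"
    using r1 r2 sumG unfolding B_def K0_def by (simp add: algebra_simps)
  have bdd: "bdd_above ((\<lambda>\<nu>. regret T \<nu> R alg) ` prob_dists_01)"
    by (rule bdd_aboveI2) (rule regret_le)
  have up1: "regret T (nu e) R alg \<le> (SUP \<nu>\<in>prob_dists_01. regret T \<nu> R alg)"
    by (rule cSUP_upper[OF nu_dist[OF ea(1)] bdd])
  have up2: "regret T (nu (-e)) R alg \<le> (SUP \<nu>\<in>prob_dists_01. regret T \<nu> R alg)"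
    by (rule cSUP_upper[OF nu_dist[OF ea(2)] bdd])
  have main: "real T * e / 192 \<le> (SUP \<nu>\<in>prob_dists_01. regret T \<nu> R alg)"
    using sumr up1 up2 by linarith
  have "1/300 * sqrt (real T) \<le> real T * e / 192"
  proof (cases "T = 0")
    case True thus ?thesis by simp
  next
    case False
    have s2: "sqrt 2 \<le> (3/2::real)" by (rule real_le_lsqrt) (auto simp: power2_eq_square)
    have "real T * e = sqrt (real T) / sqrt 2"
    proof -
      have "sqrt (real (2*T)) = sqrt 2 * sqrt (real T)" by (simp add: real_sqrt_mult)
      moreover have "real T = sqrt (real T) * sqrt (real T)" by simp
      ultimately show ?thesis using False by (simp add: e_def field_simps)
    qed
    moreover have "1/300 * sqrt (real T) \<le> sqrt (real T) / sqrt 2 / 192"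
    proof -
      have k: "sqrt 2 * 16 \<le> (25::real)" using s2 by linarith
      have "sqrt (real T) * (sqrt 2 * 16) \<le> sqrt (real T) * 25" by (rule mult_left_mono[OF k]) simp
      thus ?thesis by (simp add: field_simps)
    qed
    ultimately show ?thesis by simp
  qed
  with main show "1/300 * sqrt (real T) \<le> (SUP \<nu>\<in>prob_dists_01. regret T \<nu> R alg)" by linarith
qed


end
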